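(* Let $\mathfrak{A}$ be a unital $C^*$-algebra, $\theta,\alpha\in\mathrm{Aut}(\mathfrak{A})$, $u\in\mathfrak{A}$ unitary with $u\,\alpha(\theta(a))=\theta(\alpha(a))u$ for all $a$, and suppose $(\mathfrak{A},\theta)$ is topologically ergodic. For $n\in\mathbb{Z}$ let $W_n:=\{a\in\mathfrak{A}\mid \alpha^{-n}(u_n)\theta(a)=a\}$. Then for each $n$, either $W_n=\{0\}$ or $W_n=\mathbb{C}w_n$ for some unitary $w_n\in\mathfrak{A}$.
   Context: The unitaries $u_n$ are defined by $u_0=I$, $u_n=u\alpha(u)\cdots\alpha^{n-1}(u)$ for $n\ge1$, $u_n=\alpha^{-1}(u^* )\alpha^{-2}(u^* )\cdots\alpha^{n}(u^* )$ for $n<0$. $(\mathfrak{A},\theta)$ topologically ergodic means $\{a\in\mathfrak{A}\mid\theta(a)=a\}=\mathbb{C}I$. *)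

theory Defs
  imports "HOL-Analysis.Analysis"
begin

text \<open>A unital C*-algebra is modelled on a type 'a that is a real unital Banach
algebra (norm 1 = 1), equipped with a complex scalar multiplication sc extending
the real one, and an involution st satisfying the C*-identity.\<close>

definition cstar_algebra ::
  "(complex \<Rightarrow> 'a::{real_normed_algebra_1,banach} \<Rightarrow> 'a) \<Rightarrow> ('a \<Rightarrow> 'a) \<Rightarrow> bool" where
  "cstar_algebra sc st \<longleftrightarrow>
     (\<forall>r x. sc (complex_of_real r) x = scaleR r x) \<and>
     (\<forall>a b x. sc (a + b) x = sc a x + sc b x) \<and>
     (\<forall>a x y. sc a (x + y) = sc a x + sc a y) \<and>
     (\<forall>a b x. sc (a * b) x = sc a (sc b x)) \<and>
     (\<forall>x. sc 1 x = x) \<and>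
     (\<forall>a x y. sc a (x * y) = sc a x * y) \<and>
     (\<forall>a x y. sc a (x * y) = x * sc a y) \<and>
     (\<forall>a x. norm (sc a x) = cmod a * norm x) \<and>
     (\<forall>x y. st (x + y) = st x + st y) \<and>
     (\<forall>a x. st (sc a x) = sc (cnj a) (st x)) \<and>
     (\<forall>x y. st (x * y) = st y * st x) \<and>
     (\<forall>x. st (st x) = x) \<and>
     (\<forall>x. norm (st x * x) = (norm x)\<^sup>2)"

definition is_aut ::
  "(complex \<Rightarrow> 'a::{real_normed_algebra_1,banach} \<Rightarrow> 'a) \<Rightarrow> ('a \<Rightarrow> 'a) \<Rightarrow> ('a \<Rightarrow> 'a) \<Rightarrow> bool" where
  "is_aut sc st f \<longleftrightarrow> bij f \<and>
     (\<forall>x y. f (x + y) = f x + f y) \<and>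
     (\<forall>c x. f (sc c x) = sc c (f x)) \<and>
     (\<forall>x y. f (x * y) = f x * f y) \<and>
     (\<forall>x. f (st x) = st (f x)) \<and>
     f 1 = 1"

definition unitary :: "('a::ring_1 \<Rightarrow> 'a) \<Rightarrow> 'a \<Rightarrow> bool" where
  "unitary st u \<longleftrightarrow> st u * u = 1 \<and> u * st u = 1"

definition apow :: "('a \<Rightarrow> 'a) \<Rightarrow> int \<Rightarrow> 'a \<Rightarrow> 'a" where
  "apow f k = (if 0 \<le> k then f ^^ nat k else inv f ^^ nat (- k))"

definition cocycle :: "('a::ring_1 \<Rightarrow> 'a) \<Rightarrow> ('a \<Rightarrow> 'a) \<Rightarrow> 'a \<Rightarrow> int \<Rightarrow> 'a" where
  "cocycle st \<alpha> u n =
     (if 0 \<le> n then prod_list (map (\<lambda>k. apow \<alpha> (int k) u) [0..<nat n])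
      else prod_list (map (\<lambda>k. apow \<alpha> (- int k) (st u)) [1..<nat (- n) + 1]))"

end

theory Submission
  imports Defs
begin


definition Neu :: "'a::{real_normed_algebra_1,banach} \<Rightarrow> 'a" where
  "Neu y = suminf (\<lambda>n. y ^ n)"

lemma neumann:
  fixes y :: "'a::{real_normed_algebra_1,banach}"
  assumes "norm y < 1"
  shows "summable (\<lambda>n. y ^ n)" "(1 - y) * Neu y = 1" "Neu y * (1 - y) = 1"
    "norm (Neu y) \<le> 1 / (1 - norm y)"
proof -
  have g: "summable (\<lambda>n. norm y ^ n)" using assms by (intro summable_geometric) auto
  have sn: "summable (\<lambda>n. norm (y ^ n))"
    by (rule summable_norm_comparison_test[OF _ g]) (intro exI[of _ 0] allI impI norm_power_ineq)
  thus s: "summable (\<lambda>n. y ^ n)" by (rule summable_norm_cancel)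
  have lim: "(\<lambda>n. y ^ n) \<longlonglongrightarrow> 0"
  proof -
    have "(\<lambda>n. norm y ^ n) \<longlonglongrightarrow> 0" using assms by (intro LIMSEQ_power_zero) auto
    thus ?thesis by (rule Lim_null_comparison[rotated]) (simp add: norm_power_ineq)
  qed
  have tel: "(\<lambda>n. y ^ n - y ^ Suc n) sums (1 - 0)"
    using telescope_sums'[OF lim] by simp
  have "(1 - y) * Neu y = (\<Sum>n. (1 - y) * y ^ n)" unfolding Neu_def by (rule suminf_mult[OF s, symmetric])
  also have "\<dots> = (\<Sum>n. y ^ n - y ^ Suc n)" by (simp add: algebra_simps)
  also have "\<dots> = 1" using tel by (simp add: sums_iff)
  finally show "(1 - y) * Neu y = 1" .
  have "Neu y * (1 - y) = (\<Sum>n. y ^ n * (1 - y))" unfolding Neu_def by (rule suminf_mult2[OF s])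
  also have "\<dots> = (\<Sum>n. y ^ n - y ^ Suc n)" by (simp add: algebra_simps power_commutes)
  also have "\<dots> = 1" using tel by (simp add: sums_iff)
  finally show "Neu y * (1 - y) = 1" .
  have "norm (Neu y) \<le> (\<Sum>n. norm y ^ n)" unfolding Neu_def
    by (rule norm_suminf_le[OF norm_power_ineq]) (use assms in \<open>auto intro: summable_geometric\<close>)
  also have "\<dots> = 1 / (1 - norm y)" using assms by (intro suminf_geometric) auto
  finally show "norm (Neu y) \<le> 1 / (1 - norm y)" .
qed

lemma tri3:
  fixes a b c :: "'a::real_normed_vector"
  shows "norm (- a + b - c) \<le> norm a + norm b + norm c"
proof -
  have "norm (- a + b - c) \<le> norm (- a + b) + norm c" by (rule norm_triangle_ineq4)
  moreover have "norm (- a + b) \<le> norm a + norm b" using norm_triangle_ineq[of "-a" b] by simp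
  ultimately show ?thesis by simp
qed

lemma inv_unique:
  fixes y :: "'a::monoid_mult"
  assumes "y * z = 1" "z' * y = 1" shows "z' = z"
  by (metis assms mult.assoc mult_1_left mult_1_right)

locale cstar =
  fixes sc :: "complex \<Rightarrow> 'a::{real_normed_algebra_1,banach} \<Rightarrow> 'a" and st :: "'a \<Rightarrow> 'a"
  assumes cs: "cstar_algebra sc st"
begin

definition kap :: "complex \<Rightarrow> 'a" where "kap c = sc c 1"

lemma sc_real: "sc (complex_of_real r) x = scaleR r x" using cs[unfolded cstar_algebra_def, THEN conjunct1] by simp
lemma sc_add1: "sc (a + b) x = sc a x + sc b x" using cs[unfolded cstar_algebra_def, THEN conjunct2, THEN conjunct1] by simp
lemma sc_mult: "sc (a * b) x = sc a (sc b x)" using cs unfolding cstar_algebra_def by blast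
lemma sc_one: "sc 1 x = x" using cs unfolding cstar_algebra_def by blast
lemma sc_ml: "sc a (x * y) = sc a x * y" using cs unfolding cstar_algebra_def by blast
lemma sc_mr: "sc a (x * y) = x * sc a y" using cs unfolding cstar_algebra_def by blast
lemma sc_norm: "norm (sc a x) = cmod a * norm x" using cs unfolding cstar_algebra_def by blast
lemma st_add: "st (x + y) = st x + st y" using cs unfolding cstar_algebra_def by blast
lemma st_sc: "st (sc a x) = sc (cnj a) (st x)" using cs unfolding cstar_algebra_def by blast
lemma st_mult_all: "\<forall>x y. st (x * y) = st y * st x" using cs by (simp add: cstar_algebra_def)
lemma st_st_all: "\<forall>x. st (st x) = x" using cs by (simp add: cstar_algebra_def)
lemma st_mult: "st (x * y) = st y * st x" using st_mult_all by simp
lemma st_st[simp]: "st (st x) = x" using st_st_all by simp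
lemma cstar_id: "norm (st x * x) = (norm x)\<^sup>2" using cs unfolding cstar_algebra_def by blast

lemma sc_kap: "sc c x = kap c * x"
  unfolding kap_def by (metis sc_ml mult_1_left)
lemma kap_comm: "kap c * x = x * kap c"
  unfolding kap_def by (metis sc_ml sc_mr mult_1_left mult_1_right)
lemma kap_add: "kap (a + b) = kap a + kap b" unfolding kap_def by (rule sc_add1)
lemma kap_mult: "kap (a * b) = kap a * kap b" unfolding kap_def by (metis sc_mult sc_kap kap_def)
lemma kap_one[simp]: "kap 1 = 1" unfolding kap_def by (rule sc_one)
lemma kap_of_real: "kap (complex_of_real r) = of_real r" unfolding kap_def by (subst sc_real) (simp add: of_real_def)
lemma kap_zero[simp]: "kap 0 = 0" using kap_of_real[of 0] by simp
lemma kap_minus: "kap (- a) = - kap a" using kap_add[of a "-a"] by (metis add.commute eq_neg_iff_add_eq_0 kap_zero add.right_inverse)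
lemma kap_diff: "kap (a - b) = kap a - kap b" using kap_add[of a "-b"] kap_minus[of b] by simp
lemma kap_norm[simp]: "norm (kap a) = cmod a" unfolding kap_def by (simp add: sc_norm)
lemma kap_norm_mult[simp]: "norm (kap a * y) = cmod a * norm y" by (metis sc_kap sc_norm)
lemma kap_of_nat: "kap (of_nat n) = of_nat n" using kap_of_real[of "of_nat n"] by simp
lemma kap_pow: "kap (a ^ n) = kap a ^ n" by (induct n) (simp_all add: kap_mult)
lemma kap_mult_pow: "(kap a * w) ^ n = kap (a ^ n) * w ^ n"
proof (induct n)
  case (Suc n)
  have "(kap a * w) ^ Suc n = kap a * w * (kap (a ^ n) * w ^ n)" using Suc by simp
  also have "\<dots> = kap a * (w * kap (a ^ n)) * w ^ n" by (simp add: mult.assoc)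
  also have "\<dots> = kap a * (kap (a ^ n) * w) * w ^ n" by (simp add: kap_comm)
  also have "\<dots> = kap (a ^ Suc n) * w ^ Suc n" by (simp add: kap_mult mult.assoc)
  finally show ?case .
qed simp

lemma kap_inj: "kap a = kap b \<Longrightarrow> a = b"
  using kap_norm[of "a - b"] kap_diff[of a b] by simp

lemma st_zero[simp]: "st 0 = 0" using st_add[of 0 0] by simp
lemma st_minus: "st (- x) = - st x" using st_add[of x "-x"] by (metis add.commute eq_neg_iff_add_eq_0 st_zero add.right_inverse)
lemma st_diff: "st (x - y) = st x - st y" using st_add[of x "-y"] st_minus[of y] by simp
lemma st_one[simp]: "st 1 = 1"
proof -
  have "st 1 = st 1 * st (st 1)" by simp
  also have "\<dots> = st (st 1 * 1)" by (simp only: st_mult)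
  finally show ?thesis by simp
qed
lemma st_kap: "st (kap a) = kap (cnj a)" unfolding kap_def by (simp add: st_sc)
lemma st_kapm: "st (kap a * x) = kap (cnj a) * st x"
  by (simp add: st_mult st_kap kap_comm)

lemma norm_st: "norm (st x) = norm x"
proof -
  have le: "norm y \<le> norm (st y)" for y
  proof (cases "y = 0")
    case False
    have "(norm y)\<^sup>2 \<le> norm (st y) * norm y" using cstar_id[of y] norm_mult_ineq[of "st y" y] by simp
    thus ?thesis using False by (simp add: power2_eq_square)
  qed simp
  show ?thesis using le[of x] le[of "st x"] by simp
qed

lemma mulk: "x * kap c = kap c * x" by (simp add: kap_comm)
lemma kk: "kap a * (kap b * y) = kap (a * b) * y" by (simp add: kap_mult mult.assoc)
lemma xk: "x * (kap c * y) = kap c * (x * y)" by (metis kap_comm mult.assoc)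
lemmas ksimps = kap_mult[symmetric] kk kap_add[symmetric] kap_diff[symmetric]

lemma circle_inv:
  assumes h1: "st x * x = -1" and h2: "x * st x = -1" and l: "cmod l = 1"
  shows "\<exists>R. (x - kap l) * R = 1 \<and> R * (x - kap l) = 1 \<and> norm R \<le> 8/3"
proof -
  have nx: "norm x = 1"
  proof -
    have "(norm x)\<^sup>2 = 1" using cstar_id[of x] h1 by simp
    hence "norm x = 1 \<or> norm x = -1" by (simp add: power2_eq_1_iff)
    thus ?thesis using norm_ge_zero[of x] by linarith
  qed
  have nsx: "norm (st x) = 1" using nx norm_st by simp
  have ll: "l * cnj l = 1" using l by (simp add: complex_norm_square[symmetric])
  define k where "k = kap (\<i> * cnj l) * x - kap (\<i> * l) * st x"
  define P where "P = kap (\<i> * cnj l) + kap \<i> * st x"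
  have stk: "st k = k"
    unfolding k_def by (simp add: st_diff st_kapm kap_minus algebra_simps)
  have xP: "(x - kap l) * P = k - kap (2 * \<i>)"
  proof -
    have "(x - kap l) * P = kap (\<i> * cnj l) * x + kap \<i> * (x * st x) - kap (l * (\<i> * cnj l)) - kap (l * \<i>) * st x"
      unfolding P_def by (simp add: algebra_simps ksimps xk[of x] xk[of "st x"] mulk[of x] mulk[of "st x"])
    also have "\<dots> = k - kap (2 * \<i>)"
      unfolding k_def h2 by (simp add: algebra_simps ksimps ll kap_minus xk[of x] xk[of "st x"] mulk[of x] mulk[of "st x"])
    finally show ?thesis .
  qed
  have Px: "P * (x - kap l) = k - kap (2 * \<i>)"
  proof -
    have "P * (x - kap l) = kap (\<i> * cnj l) * x + kap \<i> * (st x * x) - kap (l * (\<i> * cnj l)) - kap (l * \<i>) * st x"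
      unfolding P_def by (simp add: algebra_simps ksimps xk[of x] xk[of "st x"] mulk[of x] mulk[of "st x"])
    also have "\<dots> = k - kap (2 * \<i>)"
      unfolding k_def h1 by (simp add: algebra_simps ksimps ll kap_minus xk[of x] xk[of "st x"] mulk[of x] mulk[of "st x"])
    finally show ?thesis .
  qed
  have nk: "norm k \<le> 2"
  proof -
    have "norm k \<le> norm (kap (\<i> * cnj l) * x) + norm (kap (\<i> * l) * st x)"
      unfolding k_def by (rule norm_triangle_ineq4)
    also have "\<dots> \<le> cmod (\<i> * cnj l) * norm x + cmod (\<i> * l) * norm (st x)"
      by (intro add_mono order_trans[OF norm_mult_ineq]) simp_all
    also have "\<dots> = 2" using l nx nsx by (simp add: norm_mult)
    finally show ?thesis .
  qed
  have nP: "norm P \<le> 2"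
  proof -
    have "norm P \<le> norm (kap (\<i> * cnj l)) + norm (kap \<i> * st x)"
      unfolding P_def by (rule norm_triangle_ineq)
    also have "\<dots> \<le> cmod (\<i> * cnj l) + cmod \<i> * norm (st x)"
      by (intro add_mono order_trans[OF norm_mult_ineq]) simp_all
    also have "\<dots> = 2" using l nsx by (simp add: norm_mult)
    finally show ?thesis .
  qed
  define B where "B = k + kap \<i>"
  have "st B * B = k * k + 1"
  proof -
    have sB: "st B = k - kap \<i>" unfolding B_def using stk by (simp add: st_add st_kap kap_minus)
    have "st B * B = (k - kap \<i>) * (k + kap \<i>)" by (simp only: sB) (simp add: B_def)
    also have "\<dots> = k * k - kap (\<i> * \<i>)" by (simp add: algebra_simps ksimps mulk[of k] xk[of k])
    finally have "st B * B = k * k - kap (\<i> * \<i>)" .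
    thus ?thesis by (simp add: kap_minus)
  qed
  hence "(norm B)\<^sup>2 = norm (k * k + 1)" using cstar_id[of B] by simp
  also have "\<dots> \<le> norm k * norm k + 1"
    by (rule order_trans[OF norm_triangle_ineq]) (simp add: norm_mult_ineq)
  also have "\<dots> \<le> 5" using nk norm_ge_zero[of k] mult_mono[of "norm k" 2 "norm k" 2] by linarith
  finally have nB2: "(norm B)\<^sup>2 \<le> 5" .
  have nB: "norm B \<le> 9/4"
  proof (rule ccontr)
    assume "\<not> norm B \<le> 9/4"
    hence "(9/4)\<^sup>2 < (norm B)\<^sup>2" by (intro power_strict_mono) auto
    thus False using nB2 by (auto simp: power2_eq_square)
  qed
  define y where "y = kap (- \<i> / 3) * B"
  have ny: "norm y \<le> 3/4"
    using nB unfolding y_def by (simp add: norm_mult)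
  hence ny1: "norm y < 1" by simp
  have ky: "k - kap (2 * \<i>) = - kap (3 * \<i>) * (1 - y)"
  proof -
    have "- kap (3 * \<i>) * (1 - y) = - kap (3 * \<i>) + kap (3 * \<i> * (- \<i> / 3)) * B"
      unfolding y_def by (simp add: algebra_simps ksimps)
    also have "\<dots> = k - kap (2 * \<i>)" unfolding B_def
      by (simp add: algebra_simps kap_diff[symmetric] kap_add[symmetric])
    finally show ?thesis by simp
  qed
  define Q where "Q = kap (\<i> / 3) * Neu y"
  have kQ: "(k - kap (2 * \<i>)) * Q = 1"
  proof -
    have "(k - kap (2 * \<i>)) * Q = - kap (3 * \<i> * (\<i> / 3)) * ((1 - y) * Neu y)"
      unfolding ky Q_def by (simp add: algebra_simps ksimps mulk[of y] xk[of y])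
    also have "\<dots> = 1" using neumann(2)[OF ny1] by (simp add: kap_minus)
    finally show ?thesis .
  qed
  have Qk: "Q * (k - kap (2 * \<i>)) = 1"
  proof -
    have "Q * (k - kap (2 * \<i>)) = - kap (\<i> / 3 * (3 * \<i>)) * (Neu y * (1 - y))"
      unfolding ky Q_def by (simp add: algebra_simps ksimps mulk[of "Neu y"] xk[of "Neu y"])
    also have "\<dots> = 1" using neumann(3)[OF ny1] by (simp add: kap_minus)
    finally show ?thesis .
  qed
  have nQ: "norm Q \<le> 4/3"
  proof -
    have "norm Q \<le> cmod (\<i> / 3) * norm (Neu y)" unfolding Q_def
      by (rule order_trans[OF norm_mult_ineq]) simp
    also have "\<dots> \<le> 1/3 * (1 / (1 - norm y))"
      by (intro mult_mono neumann(4)[OF ny1]) (auto simp: norm_divide)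
    also have "\<dots> \<le> 1/3 * 4" using ny ny1 by (intro mult_left_mono) (auto simp: field_simps)
    finally show ?thesis by simp
  qed
  have r1: "(x - kap l) * (P * Q) = 1" using xP kQ by (simp add: mult.assoc[symmetric])
  have r2: "(Q * P) * (x - kap l) = 1" using Px Qk by (simp add: mult.assoc)
  have eq: "Q * P = P * Q" using inv_unique[OF r1 r2] .
  have "norm (P * Q) \<le> 8/3"
  proof -
    have "norm P * norm Q \<le> 2 * (4/3)" using nP nQ by (intro mult_mono) auto
    thus ?thesis using norm_mult_ineq[of P Q] by simp
  qed
  thus ?thesis using r1 r2 eq by auto
qed

lemma perturb:
  assumes r1: "(a - kap l) * R = 1" and r2: "R * (a - kap l) = 1" and sm: "cmod (m - l) * norm R \<le> 1/2"
  shows "\<exists>R'. (a - kap m) * R' = 1 \<and> R' * (a - kap m) = 1 \<and> norm R' \<le> 2 * norm R"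
proof -
  define y where "y = kap (m - l) * R"
  have ny: "norm y \<le> 1/2" unfolding y_def using sm
    by (rule order_trans[OF norm_mult_ineq[THEN order_trans], rotated]) simp
  hence ny1: "norm y < 1" by simp
  have fac: "a - kap m = (a - kap l) * (1 - y)"
  proof -
    have "(a - kap l) * (1 - y) = (a - kap l) - kap (m - l) * ((a - kap l) * R)"
      unfolding y_def by (simp add: algebra_simps ksimps mulk[of a] xk[of a])
    also have "\<dots> = a - kap m" using r1 by (simp add: kap_diff)
    finally show ?thesis by simp
  qed
  have "(a - kap m) * (Neu y * R) = 1"
    unfolding fac using neumann(2)[OF ny1] r1 by (simp add: mult.assoc[symmetric])
      (metis mult.assoc mult_1_right)
  moreover have "(Neu y * R) * (a - kap m) = 1"
    unfolding fac using neumann(3)[OF ny1] r2 by (metis mult.assoc mult_1_left)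
  moreover have "norm (Neu y * R) \<le> 2 * norm R"
  proof -
    have "norm (Neu y * R) \<le> norm (Neu y) * norm R" by (rule norm_mult_ineq)
    also have "\<dots> \<le> (1 / (1 - norm y)) * norm R" by (intro mult_right_mono neumann(4)[OF ny1]) simp
    also have "\<dots> \<le> 2 * norm R" using ny by (intro mult_right_mono) (auto simp: field_simps)
    finally show ?thesis .
  qed
  ultimately show ?thesis by blast
qed

lemma resolv:
  assumes "R * (a - kap l) = 1" and "(a - kap m) * R' = 1"
  shows "R - R' = kap (l - m) * (R * R')"
proof -
  have "R - R' = R * ((a - kap m) * R') - (R * (a - kap l)) * R'" using assms by simp
  also have "\<dots> = R * (kap l - kap m) * R'" by (simp add: algebra_simps)
  also have "\<dots> = kap (l - m) * (R * R')" by (simp add: kap_diff[symmetric] kap_comm mult.assoc)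
  finally show ?thesis .
qed

lemma inside:
  assumes xz: "x * z = 1" "z * x = 1" and nz: "norm z \<le> 1" and l: "cmod l < 1"
  defines "y \<equiv> kap l * z"
  shows "norm y < 1" "(x - kap l) * (Neu y * z) = 1" "(Neu y * z) * (x - kap l) = 1"
    "kap l * (Neu y * z) = Neu y - 1"
proof -
  have "norm y \<le> cmod l * norm z" unfolding y_def using norm_mult_ineq[of "kap l" z] by simp
  also have "\<dots> \<le> cmod l" using nz by (simp add: mult_left_le)
  finally show ny1: "norm y < 1" using l by simp
  have fac: "x - kap l = x * (1 - y)" unfolding y_def using xz by (simp add: algebra_simps ksimps mulk[of x] xk[of x])
  show "(x - kap l) * (Neu y * z) = 1" unfolding fac using neumann(2)[OF ny1] xz
    by (metis mult.assoc mult_1_left)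
  show "(Neu y * z) * (x - kap l) = 1" unfolding fac using neumann(3)[OF ny1] xz
    by (metis mult.assoc mult_1_left)
  have "kap l * (Neu y * z) = Neu y * y" unfolding y_def by (simp add: kap_comm mult.assoc)
  also have "\<dots> = Neu y - Neu y * (1 - y)" by (simp add: algebra_simps)
  also have "\<dots> = Neu y - 1" using neumann(3)[OF ny1] by simp
  finally show "kap l * (Neu y * z) = Neu y - 1" .
qed

lemma outside:
  assumes nx: "norm x \<le> 1" and l: "cmod l > 1"
  defines "y \<equiv> kap (1 / l) * x"
  shows "norm y < 1" "(x - kap l) * (- kap (1 / l) * Neu y) = 1" "(- kap (1 / l) * Neu y) * (x - kap l) = 1"
    "kap l * (- kap (1 / l) * Neu y) = - Neu y"
proof -
  have l0: "l \<noteq> 0" using l by auto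
  have "norm y \<le> cmod (1 / l) * norm x" unfolding y_def using norm_mult_ineq[of "kap (1/l)" x] by simp
  also have "\<dots> \<le> cmod (1/l)" using nx by (simp add: mult_left_le)
  also have "\<dots> < 1" using l by (simp add: norm_divide divide_less_eq)
  finally show ny1: "norm y < 1" .
  have fac: "x - kap l = - kap l * (1 - y)" unfolding y_def using l0
    by (simp add: algebra_simps ksimps)
  have e1: "kap l * kap (1 / l) = 1" using l0 by (simp flip: kap_mult)
  have e2: "kap (1 / l) * kap l = 1" using l0 by (simp flip: kap_mult)
  show "(x - kap l) * (- kap (1 / l) * Neu y) = 1"
  proof -
    have "(x - kap l) * (- kap (1 / l) * Neu y) = (kap l * kap (1 / l)) * ((1 - y) * Neu y)"
      unfolding fac by (simp add: mult.assoc kap_comm[of "1/l"])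
    thus ?thesis using e1 neumann(2)[OF ny1] by simp
  qed
  show "(- kap (1 / l) * Neu y) * (x - kap l) = 1"
  proof -
    have "(- kap (1 / l) * Neu y) * (x - kap l) = (kap (1 / l) * kap l) * (Neu y * (1 - y))"
      unfolding fac by (simp add: mult.assoc) (metis kap_comm mult.assoc)
    thus ?thesis using e2 neumann(3)[OF ny1] by simp
  qed
  show "kap l * (- kap (1 / l) * Neu y) = - Neu y" using e1 by (simp add: mult.assoc[symmetric])
qed

lemma kap_sum: "kap (sum g A) = (\<Sum>i\<in>A. kap (g i))"
  by (induct A rule: infinite_finite_induct) (simp_all add: kap_add)

lemma avg:
  assumes N: "0 < N" and wN: "\<omega> ^ N = 1" and wp: "\<And>m. 0 < m \<Longrightarrow> m < N \<Longrightarrow> \<omega> ^ m \<noteq> 1"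
    and w1: "cmod \<omega> = 1" and nw: "norm w \<le> 1" and r0: "0 \<le> r" and r1: "r < 1"
  shows "norm ((\<Sum>k<N. Neu (kap (of_real r * \<omega> ^ k) * w)) - of_nat N) \<le> of_nat N * r ^ N / (1 - r)"
proof -
  define f where "f k n = (kap (of_real r * \<omega> ^ k) * w) ^ n" for k n
  define E where "E n = (\<Sum>k<N. (of_real r * \<omega> ^ k) ^ n)" for n
  define F where "F n = kap (E n) * w ^ n" for n
  have nyk: "norm (kap (of_real r * \<omega> ^ k) * w) < 1" for k
  proof -
    have "norm (kap (of_real r * \<omega> ^ k) * w) \<le> cmod (of_real r * \<omega> ^ k) * norm w"
      using norm_mult_ineq[of "kap (of_real r * \<omega> ^ k)" w] by simp
    also have "\<dots> \<le> r" using nw r0 w1 by (simp add: norm_mult norm_power mult_left_le)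
    finally show ?thesis using r1 by simp
  qed
  have sf: "summable (f k)" for k unfolding f_def using neumann(1)[OF nyk] .
  have fF: "(\<Sum>k<N. f k n) = F n" for n
    unfolding f_def F_def E_def by (simp add: kap_mult_pow kap_sum sum_distrib_right)
  have "(\<Sum>k<N. Neu (kap (of_real r * \<omega> ^ k) * w)) = (\<Sum>k<N. suminf (f k))"
    unfolding Neu_def f_def ..
  also have "\<dots> = suminf F" using suminf_sum[of "{..<N}" f, OF sf] fF by simp
  finally have eq1: "(\<Sum>k<N. Neu (kap (of_real r * \<omega> ^ k) * w)) = suminf F" .
  have sF: "summable F" using summable_sum[of "{..<N}" f, OF sf] fF by simp
  have E0: "E n = 0" if "0 < n" "n < N" for n
  proof -
    have "E n = of_real (r ^ n) * (\<Sum>k<N. (\<omega> ^ n) ^ k)"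
      unfolding E_def by (simp add: sum_distrib_left power_mult_distrib power_mult[symmetric] mult.commute)
    also have "(\<Sum>k<N. (\<omega> ^ n) ^ k) = 0"
    proof -
      have "(\<omega> ^ n) ^ N = 1" using wN by (simp add: power_mult[symmetric] mult.commute power_mult)
      thus ?thesis using wp[OF that] by (simp add: sum_gp_strict)
    qed
    finally show ?thesis by simp
  qed
  have Einit: "(\<Sum>n<N. F n) = of_nat N"
  proof -
    have "(\<Sum>n<N. F n) = F 0 + (\<Sum>n\<in>{..<N} - {0}. F n)" using N by (subst sum.remove[of _ 0]) auto
    also have "(\<Sum>n\<in>{..<N} - {0}. F n) = 0" by (rule sum.neutral) (auto simp: F_def E0)
    also have "F 0 = of_nat N" unfolding F_def E_def by (simp add: kap_of_nat)
    finally show ?thesis by simp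
  qed
  have bndE: "cmod (E m) \<le> of_nat N * r ^ m" for m
  proof -
    have "cmod (E m) \<le> (\<Sum>k<N. cmod ((of_real r * \<omega> ^ k) ^ m))" unfolding E_def by (rule norm_sum)
    also have "\<dots> = of_nat N * r ^ m" using r0 w1 by (simp add: norm_power norm_mult)
    finally show ?thesis .
  qed
  have bndF: "norm (F (n + N)) \<le> of_nat N * r ^ N * r ^ n" for n
  proof -
    have "norm (F (n + N)) \<le> cmod (E (n + N)) * norm (w ^ (n + N))"
      unfolding F_def using norm_mult_ineq[of "kap (E (n+N))"] by simp
    also have "\<dots> \<le> (of_nat N * r ^ (n + N)) * 1"
    proof (intro mult_mono bndE)
      show "norm (w ^ (n + N)) \<le> 1"
        using norm_power_ineq[of w "n+N"] power_le_one[OF norm_ge_zero nw, of "n+N"] by linarith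
    qed (use r0 in auto)
    finally show ?thesis by (simp add: power_add mult_ac)
  qed
  have gs: "summable (\<lambda>n. of_nat N * r ^ N * r ^ n)" using r0 r1 by (intro summable_mult summable_geometric) auto
  have "norm (suminf F - of_nat N) = norm (\<Sum>n. F (n + N))"
    using suminf_split_initial_segment[OF sF, of N] Einit by simp
  also have "\<dots> \<le> (\<Sum>n. of_nat N * r ^ N * r ^ n)" by (rule norm_suminf_le[OF bndF gs])
  also have "\<dots> = of_nat N * r ^ N * (1 / (1 - r))" using r0 r1 by (simp add: suminf_mult suminf_geometric)
  finally show ?thesis using eq1 by simp
qed

lemma compare_pt:
  assumes h1: "st x * x = -1" and h2: "x * st x = -1" and l0: "cmod l0 = 1"
    and d0: "0 < d" and d1: "d \<le> 1/512"
  defines "lam \<equiv> of_real (1 - d) * l0" and "lam' \<equiv> of_real (1 + d) * l0"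
  shows "norm (kap lam * (Neu (kap lam * (- st x)) * (- st x))
           - kap lam' * (- kap (1 / lam') * Neu (kap (1 / lam') * x))) \<le> 1/4"
proof -
  define z where "z = - st x"
  have xz: "x * z = 1" "z * x = 1" unfolding z_def using h1 h2 by simp_all
  have nx: "norm x = 1"
  proof -
    have "(norm x)\<^sup>2 = 1" using cstar_id[of x] h1 by simp
    hence "norm x = 1 \<or> norm x = -1" by (simp add: power2_eq_1_iff)
    thus ?thesis using norm_ge_zero[of x] by linarith
  qed
  have nz: "norm z = 1" unfolding z_def using nx norm_st by simp
  obtain R0 where R0: "(x - kap l0) * R0 = 1" "R0 * (x - kap l0) = 1" "norm R0 \<le> 8/3"
    using circle_inv[OF h1 h2 l0] by blast
  have cl: "cmod lam = 1 - d" unfolding lam_def using l0 d1 by (simp only: norm_mult norm_of_real) simp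
  have cl': "cmod lam' = 1 + d" unfolding lam'_def using l0 d0 by (simp only: norm_mult norm_of_real) simp
  have dl: "cmod (lam - l0) = d"
  proof -
    have "lam - l0 = of_real (- d) * l0" unfolding lam_def by (simp add: algebra_simps)
    thus ?thesis using l0 d0 by (simp add: norm_mult)
  qed
  have dl': "cmod (lam' - l0) = d"
  proof -
    have "lam' - l0 = of_real d * l0" unfolding lam'_def by (simp add: algebra_simps)
    thus ?thesis using l0 d0 by (simp add: norm_mult)
  qed
  have sm: "cmod (m - l0) * norm R0 \<le> 1/2" if "cmod (m - l0) = d" for m
  proof -
    have "cmod (m - l0) * norm R0 \<le> (1/512) * (8/3)"
      using that d1 d0 R0(3) by (intro mult_mono) auto
    thus ?thesis by simp
  qed
  obtain R1 where R1: "(x - kap lam) * R1 = 1" "R1 * (x - kap lam) = 1" "norm R1 \<le> 2 * norm R0"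
    using perturb[OF R0(1,2) sm[OF dl]] by blast
  obtain R2 where R2: "(x - kap lam') * R2 = 1" "R2 * (x - kap lam') = 1" "norm R2 \<le> 2 * norm R0"
    using perturb[OF R0(1,2) sm[OF dl']] by blast
  have in1: "cmod lam < 1" using cl d0 by simp
  have out1: "cmod lam' > 1" using cl' d0 by simp
  note I = inside[OF xz nz[THEN eq_refl] in1]
  note O = outside[OF nx[THEN eq_refl] out1]
  define Iv where "Iv = Neu (kap lam * z) * z"
  define Ov where "Ov = - kap (1 / lam') * Neu (kap (1 / lam') * x)"
  have IR: "Iv = R1" using inv_unique[OF R1(1) I(3)] unfolding Iv_def by simp
  have OR: "Ov = R2" using inv_unique[OF R2(1) O(3)] unfolding Ov_def by simp
  have nI: "norm Iv \<le> 16/3" using IR R1(3) R0(3) by simp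
  have nO: "norm Ov \<le> 16/3" using OR R2(3) R0(3) by simp
  have res: "Iv - Ov = kap (lam - lam') * (Iv * Ov)"
    by (rule resolv) (use I(3) O(2) in \<open>simp_all add: Iv_def Ov_def\<close>)
  have "kap lam * Iv - kap lam' * Ov = kap (lam - lam') * Iv + kap lam' * (Iv - Ov)"
    by (simp add: algebra_simps kap_diff)
  also have "\<dots> = kap (lam - lam') * Iv + kap lam' * (kap (lam - lam') * (Iv * Ov))"
    using res by simp
  finally have eq: "kap lam * Iv - kap lam' * Ov = kap (lam - lam') * Iv + kap lam' * (kap (lam - lam') * (Iv * Ov))" .
  have dd: "cmod (lam - lam') = 2 * d"
  proof -
    have "lam - lam' = of_real (- 2 * d) * l0" unfolding lam_def lam'_def by (simp add: algebra_simps)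
    thus ?thesis using l0 d0 by (simp add: norm_mult)
  qed
  have "norm (kap lam * Iv - kap lam' * Ov) \<le> norm (kap (lam - lam') * Iv) + norm (kap lam' * (kap (lam - lam') * (Iv * Ov)))"
    unfolding eq by (rule norm_triangle_ineq)
  also have "\<dots> \<le> (2 * d) * norm Iv + (1 + d) * ((2 * d) * (norm Iv * norm Ov))"
  proof (intro add_mono)
    show "norm (kap (lam - lam') * Iv) \<le> (2 * d) * norm Iv"
      using norm_mult_ineq[of "kap (lam - lam')" Iv] dd by simp
    have "norm (kap lam' * (kap (lam - lam') * (Iv * Ov))) \<le> (1 + d) * norm (kap (lam - lam') * (Iv * Ov))"
      using norm_mult_ineq[of "kap lam'"] cl' by simp
    also have "\<dots> \<le> (1 + d) * ((2 * d) * norm (Iv * Ov))"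
      using norm_mult_ineq[of "kap (lam - lam')" "Iv * Ov"] dd d0 by (intro mult_left_mono) auto
    also have "\<dots> \<le> (1 + d) * ((2 * d) * (norm Iv * norm Ov))"
      using d0 by (intro mult_left_mono norm_mult_ineq) auto
    finally show "norm (kap lam' * (kap (lam - lam') * (Iv * Ov))) \<le> (1 + d) * ((2 * d) * (norm Iv * norm Ov))" .
  qed
  also have "\<dots> \<le> (2 * d) * (16/3) + (1 + d) * ((2 * d) * ((16/3) * (16/3)))"
    using d0 nI nO by (intro add_mono mult_left_mono mult_mono) auto
  also have "\<dots> \<le> 1/4"
  proof -
    have "d * d \<le> (1/512) * (1/512)" using d0 d1 by (intro mult_mono) auto
    thus ?thesis using d0 d1 by (simp add: field_simps)
  qed
  finally show ?thesis by (simp add: Iv_def Ov_def z_def)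
qed

end


context cstar begin

lemma no_neg:
  assumes h1: "st x * x = -1" and h2: "x * st x = -1"
  shows False
proof -
  define d :: real where "d = 1/512"
  define s where "s = 1 - d"
  define s' where "s' = 1 + d"
  have d0: "0 < d" and d1: "d \<le> 1/512" unfolding d_def by auto
  have ev1: "eventually (\<lambda>N. s ^ N < d / 4) sequentially"
    by (rule order_tendstoD(2)[OF LIMSEQ_power_zero]) (use d0 in \<open>auto simp: s_def d_def\<close>)
  have ev2: "eventually (\<lambda>N. (1 / s') ^ N < d / (4 * (1 + d))) sequentially"
    by (rule order_tendstoD(2)[OF LIMSEQ_power_zero]) (use d0 in \<open>auto simp: s'_def d_def\<close>)
  obtain N where N0: "0 < N" and e1: "s ^ N < d / 4" and e3: "(1 / s') ^ N < d / (4 * (1 + d))"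
  proof -
    have "eventually (\<lambda>N. 0 < N \<and> s ^ N < d / 4 \<and> (1 / s') ^ N < d / (4 * (1 + d))) sequentially"
      using ev1 ev2 eventually_gt_at_top[of 0] by eventually_elim auto
    then obtain N0 where "\<forall>n\<ge>N0. 0 < n \<and> s ^ n < d / 4 \<and> (1 / s') ^ n < d / (4 * (1 + d))"
      unfolding eventually_sequentially by blast
    thus ?thesis using that by blast
  qed
  define \<omega> where "\<omega> = exp (2 * pi * \<i> / of_nat N)"
  have wpow: "\<omega> ^ m = exp (2 * pi * \<i> * of_nat m / of_nat N)" for m
    unfolding \<omega>_def exp_of_nat_mult[symmetric] by (simp add: field_simps)
  have wN: "\<omega> ^ N = 1" unfolding wpow using N0 by simp
  have wp: "\<omega> ^ m \<noteq> 1" if "0 < m" "m < N" for m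
  proof
    assume "\<omega> ^ m = 1"
    then obtain j :: int where j: "2 * pi * of_nat m / of_nat N = of_int (2 * j) * pi"
      unfolding wpow exp_eq_1 by auto
    hence "real m = of_int j * real N" using N0 by (simp add: field_simps)
    hence "real_of_int (int m) = real_of_int (j * int N)" by simp
    hence "int m = j * int N" by (simp only: of_int_eq_iff)
    thus False
    proof (cases "j \<le> 0")
      case True
      hence "j * int N \<le> 0" by (simp add: mult_nonpos_nonneg)
      thus False using \<open>int m = j * int N\<close> that by linarith
    next
      case False
      hence "1 * int N \<le> j * int N" by (intro mult_right_mono) auto
      thus False using \<open>int m = j * int N\<close> that by linarith
    qed
  qed
  have w1: "cmod \<omega> = 1" unfolding \<omega>_def by simp
  have w0: "\<omega> \<noteq> 0" using w1 by auto
  define z where "z = - st x"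
  have xz: "x * z = 1" "z * x = 1" unfolding z_def using h1 h2 by simp_all
  have nx: "norm x = 1"
  proof -
    have "(norm x)\<^sup>2 = 1" using cstar_id[of x] h1 by simp
    hence "norm x = 1 \<or> norm x = -1" by (simp add: power2_eq_1_iff)
    thus ?thesis using norm_ge_zero[of x] by linarith
  qed
  have nz: "norm z = 1" unfolding z_def using nx norm_st by simp
  define lam where "lam k = of_real s * \<omega> ^ k" for k
  define lam' where "lam' k = of_real s' * \<omega> ^ k" for k
  define X where "X k = kap (lam k) * (Neu (kap (lam k) * z) * z)" for k
  define X' where "X' k = kap (lam' k) * (- kap (1 / lam' k) * Neu (kap (1 / lam' k) * x))" for k
  have cmp: "norm (X k - X' k) \<le> 1/4" for k
  proof -
    have "cmod (\<omega> ^ k) = 1" using w1 by (simp add: norm_power)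
    thus ?thesis unfolding X_def X'_def lam_def lam'_def z_def s_def s'_def
      by (rule compare_pt[OF h1 h2 _ d0 d1])
  qed
  have cl: "cmod (lam k) < 1" for k unfolding lam_def s_def using w1 d0 d1
    by (simp only: norm_mult norm_power norm_of_real) simp
  have cl': "cmod (lam' k) > 1" for k unfolding lam'_def s'_def using w1 d0
    by (simp only: norm_mult norm_power norm_of_real) simp
  have XX: "X k = Neu (kap (lam k) * z) - 1" for k
    unfolding X_def using inside(4)[OF xz nz[THEN eq_refl] cl] .
  have XX': "X' k = - Neu (kap (of_real (1 / s') * (1 / \<omega>) ^ k) * x)" for k
  proof -
    have "1 / lam' k = of_real (1 / s') * (1 / \<omega>) ^ k"
      unfolding lam'_def by (simp add: power_one_over)
    moreover have "X' k = - Neu (kap (1 / lam' k) * x)" unfolding X'_def by (rule outside(4)[OF nx[THEN eq_refl] cl'])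
    ultimately show ?thesis by (simp only:)
  qed
  have A1: "norm ((\<Sum>k<N. Neu (kap (of_real s * \<omega> ^ k) * z)) - of_nat N) \<le> of_nat N * s ^ N / (1 - s)"
    by (rule avg[OF N0 wN wp w1]) (use nz d0 d1 in \<open>auto simp: s_def\<close>)
  have A2: "norm ((\<Sum>k<N. Neu (kap (of_real (1 / s') * (1 / \<omega>) ^ k) * x)) - of_nat N)
      \<le> of_nat N * (1 / s') ^ N / (1 - 1 / s')"
  proof (rule avg[OF N0])
    show "(1 / \<omega>) ^ N = 1" using wN by (simp add: power_one_over)
    show "(1 / \<omega>) ^ m \<noteq> 1" if "0 < m" "m < N" for m using wp[OF that] by (simp add: power_one_over)
    show "cmod (1 / \<omega>) = 1" using w1 by (simp add: norm_divide)
  qed (use nx d0 in \<open>auto simp: s'_def\<close>)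
  define S where "S = (\<Sum>k<N. Neu (kap (of_real s * \<omega> ^ k) * z))"
  define S' where "S' = (\<Sum>k<N. Neu (kap (of_real (1 / s') * (1 / \<omega>) ^ k) * x))"
  have sumX: "(\<Sum>k<N. X k) = S - of_nat N" unfolding S_def XX lam_def by (simp add: sum_subtractf)
  have sumX': "(\<Sum>k<N. X' k) = - S'" unfolding S'_def XX' by (simp add: sum_negf)
  have key: "(of_nat N :: 'a) = - (S' - of_nat N) + (\<Sum>k<N. X k - X' k) - (\<Sum>k<N. X k)"
    using sumX sumX' by (simp add: sum_subtractf)
  have n3: "norm (\<Sum>k<N. X k - X' k) \<le> of_nat N * (1/4)"
    using sum_norm_le[of "{..<N}" "\<lambda>k. X k - X' k" "\<lambda>k. 1/4", OF cmp] by simp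
  have "real N = norm (of_nat N :: 'a)" by simp
  also have "\<dots> \<le> norm (S' - of_nat N) + norm (\<Sum>k<N. X k - X' k) + norm (\<Sum>k<N. X k)"
    by (subst key) (rule tri3)
  also have "\<dots> \<le> of_nat N * (1 / s') ^ N / (1 - 1 / s') + of_nat N * (1/4) + of_nat N * s ^ N / (1 - s)"
  proof -
    have A1': "norm (\<Sum>k<N. X k) \<le> of_nat N * s ^ N / (1 - s)" using A1 sumX unfolding S_def by simp
    have A2': "norm (S' - of_nat N) \<le> of_nat N * (1 / s') ^ N / (1 - 1 / s')" using A2 unfolding S'_def by simp
    show ?thesis using A1' A2' n3 by linarith
  qed
  also have "\<dots> < real N * (1/4) + real N * (1/4) + real N * (1/4)"
  proof -
    have a: "(1 / s') ^ N / (1 - 1 / s') < 1/4"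
    proof -
      have "1 - 1 / s' = d / (1 + d)" unfolding s'_def using d0 by (simp add: field_simps)
      thus ?thesis using e3 d0 by (simp add: field_simps)
    qed
    have b: "s ^ N / (1 - s) < 1/4" using e1 d0 unfolding s_def by (simp add: field_simps)
    have a': "real N * ((1 / s') ^ N / (1 - 1 / s')) < real N * (1/4)"
      using a N0 by (intro mult_strict_left_mono) auto
    have b': "real N * (s ^ N / (1 - s)) < real N * (1/4)"
      using b N0 by (intro mult_strict_left_mono) auto
    show ?thesis using a' b' by (simp add: times_divide_eq_right)
  qed
  finally show False by simp
qed


end


lemma aut_facts:
  assumes "is_aut sc st f"
  shows "bij f" "f (x + y) = f x + f y" "f (sc c x) = sc c (f x)" "f (x * y) = f x * f y"
    "f (st x) = st (f x)" "f 1 = 1"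
  using assms unfolding is_aut_def by auto

lemma aut_inv:
  assumes a: "is_aut sc st f"
  shows "is_aut sc st (inv f)"
proof -
  have b: "bij f" using aut_facts[OF a] by simp
  have fi: "f (inv f y) = y" for y using b by (simp add: bij_is_surj surj_f_inv_f)
  have if1: "inv f (f y) = y" for y using b by (simp add: bij_is_inj inv_f_f)
  show ?thesis unfolding is_aut_def
  proof (intro conjI allI)
    show "bij (inv f)" using b by (rule bij_imp_bij_inv)
    show "inv f (x + y) = inv f x + inv f y" for x y
      by (metis aut_facts(2)[OF a] fi if1)
    show "inv f (sc c x) = sc c (inv f x)" for c x
      by (metis aut_facts(3)[OF a] fi if1)
    show "inv f (x * y) = inv f x * inv f y" for x y
      by (metis aut_facts(4)[OF a] fi if1)
    show "inv f (st x) = st (inv f x)" for x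
      by (metis aut_facts(5)[OF a] fi if1)
    show "inv f 1 = 1" by (metis aut_facts(6)[OF a] if1)
  qed
qed

lemma aut_comp:
  assumes "is_aut sc st f" "is_aut sc st g"
  shows "is_aut sc st (f \<circ> g)"
  using assms unfolding is_aut_def by (auto intro: bij_comp)

lemma aut_id: "is_aut sc st id"
  unfolding is_aut_def by auto

lemma aut_pow:
  assumes "is_aut sc st f"
  shows "is_aut sc st (f ^^ k)"
  by (induct k) (simp_all only: funpow.simps aut_id aut_comp assms)

lemma aut_apow:
  assumes "is_aut sc st f"
  shows "is_aut sc st (apow f k)"
  unfolding apow_def using aut_pow[OF assms] aut_pow[OF aut_inv[OF assms]] by simp

lemma apow_pos: "apow f (int k) = f ^^ k" unfolding apow_def by simp
lemma apow_neg: "apow f (- int k) = inv f ^^ k" unfolding apow_def by (cases "k = 0") simp_all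

lemma pow_inv1:
  fixes f :: "'a \<Rightarrow> 'a"
  assumes "bij f" shows "(inv f ^^ k) ((f ^^ k) y) = y"
proof (induct k arbitrary: y)
  case (Suc k)
  have e1: "inv f ^^ Suc k = (inv f ^^ k) \<circ> inv f" by (rule funpow_Suc_right)
  have e2: "f ^^ Suc k = f \<circ> (f ^^ k)" by simp
  have "(inv f ^^ Suc k) ((f ^^ Suc k) y) = (inv f ^^ k) (inv f (f ((f ^^ k) y)))"
    by (simp only: e1 e2 comp_apply)
  also have "\<dots> = y" using assms Suc by (simp add: bij_is_inj inv_f_f)
  finally show ?case .
qed simp

lemma pow_inv2:
  fixes f :: "'a \<Rightarrow> 'a"
  assumes "bij f" shows "(f ^^ k) ((inv f ^^ k) y) = y"
proof (induct k arbitrary: y)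
  case (Suc k)
  have e1: "f ^^ Suc k = (f ^^ k) \<circ> f" by (rule funpow_Suc_right)
  have e2: "inv f ^^ Suc k = inv f \<circ> (inv f ^^ k)" by simp
  have "(f ^^ Suc k) ((inv f ^^ Suc k) y) = (f ^^ k) (f (inv f ((inv f ^^ k) y)))"
    by (simp only: e1 e2 comp_apply)
  also have "\<dots> = y" using assms Suc by (simp add: bij_is_surj surj_f_inv_f)
  finally show ?case .
qed simp

lemma aut_prod_list:
  assumes "is_aut sc st f"
  shows "f (prod_list xs) = prod_list (map f xs)"
  by (induct xs) (simp_all add: aut_facts[OF assms])

context cstar
begin

lemma unitary_aut: "unitary st v \<Longrightarrow> is_aut sc st f \<Longrightarrow> unitary st (f v)"
  unfolding unitary_def by (metis aut_facts(4,5,6))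

lemma unitary_mult: "unitary st a \<Longrightarrow> unitary st b \<Longrightarrow> unitary st (a * b)"
  unfolding unitary_def by (simp add: st_mult) (metis mult.assoc mult_1_left)

lemma unitary_one: "unitary st 1" unfolding unitary_def by simp

lemma unitary_st: "unitary st a \<Longrightarrow> unitary st (st a)"
  unfolding unitary_def by simp

lemma unitary_prod_list: "(\<And>x. x \<in> set xs \<Longrightarrow> unitary st x) \<Longrightarrow> unitary st (prod_list xs)"
  by (induct xs) (simp_all add: unitary_one unitary_mult)

end



context cstar begin

lemma cocycle_all:
  assumes th: "is_aut sc st \<theta>" and al: "is_aut sc st \<alpha>" and uu: "unitary st u"
    and rel: "\<forall>a. u * \<alpha> (\<theta> a) = \<theta> (\<alpha> a) * u"
  shows "(\<forall>w. apow \<alpha> n (apow \<alpha> (-n) w) = w) \<and> (\<forall>w. apow \<alpha> (-n) (apow \<alpha> n w) = w)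
    \<and> unitary st (cocycle st \<alpha> u n)
    \<and> (\<forall>z. \<theta> (apow \<alpha> n z) = cocycle st \<alpha> u n * apow \<alpha> n (\<theta> z) * st (cocycle st \<alpha> u n))"
proof -
  have ba: "bij \<alpha>" using aut_facts(1)[OF al] .
  have ai: "is_aut sc st (inv \<alpha>)" by (rule aut_inv[OF al])
  define c where "c m = prod_list (map (\<lambda>k. (\<alpha> ^^ k) u) [0..<m])" for m
  define d where "d m = prod_list (map (\<lambda>k. (inv \<alpha> ^^ k) (st u)) [1..<m+1])" for m
  have cpos: "cocycle st \<alpha> u (int m) = c m" for m
    unfolding cocycle_def c_def by (simp add: apow_pos)
  have cneg: "cocycle st \<alpha> u (- int m) = d m" if "0 < m" for m
    unfolding cocycle_def d_def using that by (simp add: apow_neg)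
  have crec: "c (Suc m) = u * \<alpha> (c m)" for m
  proof -
    have "[0..<Suc m] = 0 # map Suc [0..<m]" by (simp add: upt_conv_Cons map_Suc_upt)
    hence "c (Suc m) = u * prod_list (map (\<lambda>k. (\<alpha> ^^ Suc k) u) [0..<m])"
      unfolding c_def by (simp add: comp_def)
    also have "prod_list (map (\<lambda>k. (\<alpha> ^^ Suc k) u) [0..<m]) = \<alpha> (c m)"
      unfolding c_def aut_prod_list[OF al] by (simp add: comp_def)
    finally show ?thesis .
  qed
  have cu: "unitary st (c m)" for m
    unfolding c_def by (rule unitary_prod_list) (auto intro: unitary_aut[OF uu] aut_pow[OF al])
  have hyp: "\<theta> (\<alpha> a) = u * \<alpha> (\<theta> a) * st u" for a
  proof -
    have "u * \<alpha> (\<theta> a) * st u = \<theta> (\<alpha> a) * (u * st u)" using rel by (simp add: mult.assoc)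
    thus ?thesis using uu unfolding unitary_def by simp
  qed
  have cid: "\<theta> ((\<alpha> ^^ m) z) = c m * (\<alpha> ^^ m) (\<theta> z) * st (c m)" for m z
  proof (induct m)
    case 0
    show ?case by (simp add: c_def)
  next
    case (Suc m)
    have "\<theta> ((\<alpha> ^^ Suc m) z) = u * \<alpha> (\<theta> ((\<alpha> ^^ m) z)) * st u" by (simp add: hyp)
    also have "\<dots> = u * \<alpha> (c m * (\<alpha> ^^ m) (\<theta> z) * st (c m)) * st u" using Suc by simp
    also have "\<dots> = (u * \<alpha> (c m)) * (\<alpha> ^^ Suc m) (\<theta> z) * (\<alpha> (st (c m)) * st u)"
      by (simp add: aut_facts(4)[OF al] mult.assoc)
    also have "\<alpha> (st (c m)) * st u = st (u * \<alpha> (c m))" by (simp add: st_mult aut_facts(5)[OF al])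
    finally show ?case by (simp add: crec)
  qed
  have dm: "d m = (inv \<alpha> ^^ m) (st (c m))" for m
  proof (induct m)
    case 0
    show ?case by (simp add: c_def d_def)
  next
    case (Suc m)
    have "d (Suc m) = d m * (inv \<alpha> ^^ Suc m) (st u)" unfolding d_def by simp
    also have "\<dots> = (inv \<alpha> ^^ m) (st (c m)) * (inv \<alpha> ^^ Suc m) (st u)" using Suc by simp
    also have "(inv \<alpha> ^^ m) (st (c m)) = (inv \<alpha> ^^ Suc m) (\<alpha> (st (c m)))"
    proof -
      have "(inv \<alpha> ^^ Suc m) (\<alpha> (st (c m))) = (inv \<alpha> ^^ m) (inv \<alpha> (\<alpha> (st (c m))))"
        by (simp only: funpow_Suc_right comp_apply)
      thus ?thesis using ba by (simp add: bij_is_inj inv_f_f)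
    qed
    also have "(inv \<alpha> ^^ Suc m) (\<alpha> (st (c m))) * (inv \<alpha> ^^ Suc m) (st u)
        = (inv \<alpha> ^^ Suc m) (\<alpha> (st (c m)) * st u)"
      using aut_facts(4)[OF aut_pow[OF ai, of "Suc m"]] by simp
    also have "\<alpha> (st (c m)) * st u = st (c (Suc m))" by (simp add: crec st_mult aut_facts(5)[OF al])
    finally show ?case .
  qed
  have du: "unitary st (d m)" for m
    unfolding dm by (intro unitary_aut[OF unitary_st[OF cu]] aut_pow[OF ai])
  have did: "\<theta> ((inv \<alpha> ^^ m) w) = d m * (inv \<alpha> ^^ m) (\<theta> w) * st (d m)" for m w
  proof -
    let ?A = "\<alpha> ^^ m" and ?B = "inv \<alpha> ^^ m"
    have AB: "?A (?B y) = y" for y by (rule pow_inv2[OF ba])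
    have BA: "?B (?A y) = y" for y by (rule pow_inv1[OF ba])
    have aB: "is_aut sc st ?B" by (rule aut_pow[OF ai])
    have "\<theta> w = c m * ?A (\<theta> (?B w)) * st (c m)" using cid[of m "?B w"] AB by simp
    hence "st (c m) * \<theta> w * c m = ?A (\<theta> (?B w))"
      using cu[of m] unfolding unitary_def by (simp add: mult.assoc) (simp flip: mult.assoc)
    hence "?B (st (c m) * \<theta> w * c m) = \<theta> (?B w)" using BA by simp
    hence "\<theta> (?B w) = ?B (st (c m)) * ?B (\<theta> w) * ?B (c m)" by (simp add: aut_facts(4)[OF aB])
    moreover have "?B (c m) = st (d m)" unfolding dm by (simp add: aut_facts(5)[OF aB])
    ultimately show ?thesis by (simp add: dm)
  qed
  show ?thesis
  proof (cases "0 \<le> n")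
    case True
    then obtain m where n: "n = int m" by (metis nonneg_int_cases)
    have A: "apow \<alpha> n = \<alpha> ^^ m" unfolding n by (rule apow_pos)
    have B: "apow \<alpha> (-n) = inv \<alpha> ^^ m" unfolding n by (rule apow_neg)
    show ?thesis unfolding A B using pow_inv1[OF ba] pow_inv2[OF ba] cu cid
      by (simp add: n cpos)
  next
    case False
    then obtain m where n: "n = - int m" and m: "0 < m" by (metis neg_int_cases neg_0_less_iff_less of_nat_0_less_iff zero_less_Suc less_le not_le)
    have A: "apow \<alpha> n = inv \<alpha> ^^ m" unfolding n by (rule apow_neg)
    have B: "apow \<alpha> (-n) = \<alpha> ^^ m" unfolding n using apow_pos[of \<alpha> m] by simp
    show ?thesis unfolding A B using pow_inv1[OF ba] pow_inv2[OF ba] du did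
      by (simp add: n cneg[OF m])
  qed
qed

end


context cstar begin

lemma aut_kap: assumes "is_aut sc st f" shows "f (kap c) = kap c"
  unfolding kap_def using aut_facts(3,6)[OF assms] by metis

lemma aut_zero: assumes "is_aut sc st f" shows "f 0 = 0"
  using aut_facts(2)[OF assms, of 0 0] by simp

lemma main_W:
  assumes th: "is_aut sc st \<theta>" and aA: "is_aut sc st A" and aB: "is_aut sc st B"
    and AB: "\<forall>w. A (B w) = w" and U: "unitary st U"
    and coc: "\<forall>z. \<theta> (A z) = U * A (\<theta> z) * st U"
    and erg: "{a. \<theta> a = a} = range (\<lambda>c. sc c 1)"
  shows "{a. B U * \<theta> a = a} = {0} \<or> (\<exists>w. unitary st w \<and> {a. B U * \<theta> a = a} = range (\<lambda>c. sc c w))"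
proof -
  define v where "v = B U"
  have vu: "unitary st v" unfolding v_def by (rule unitary_aut[OF U aB])
  have vv: "st v * v = 1" "v * st v = 1" using vu unfolding unitary_def by auto
  have UU: "st U * U = 1" "U * st U = 1" using U unfolding unitary_def by auto
  have ergE: "\<exists>c. y = kap c" if "\<theta> y = y" for y
  proof -
    have "y \<in> range (\<lambda>c. sc c 1)" using that erg by blast
    thus ?thesis unfolding kap_def by blast
  qed
  define W where "W = {a. v * \<theta> a = a}"
  have kW: "kap d * b \<in> W" if "b \<in> W" for b d
  proof -
    have "v * \<theta> (kap d * b) = kap d * (v * \<theta> b)"
      by (simp add: aut_facts(4)[OF th] aut_kap[OF th] xk[of v])
    thus ?thesis using that unfolding W_def by simp
  qed
  show ?thesis
  proof (cases "W = {0}")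
    case True
    thus ?thesis unfolding W_def v_def by simp
  next
    case False
    have "0 \<in> W" unfolding W_def by (simp add: aut_zero[OF th])
    with False obtain a where aW: "a \<in> W" and a0: "a \<noteq> 0" by blast
    have thW: "\<theta> b = st v * b" if "b \<in> W" for b
    proof -
      have "st v * (v * \<theta> b) = st v * b" using that unfolding W_def by simp
      thus ?thesis using vv by (simp flip: mult.assoc)
    qed
    have pair: "\<exists>c. st a * b = kap c" if "b \<in> W" for b
    proof (rule ergE)
      have "\<theta> (st a * b) = st (st v * a) * (st v * b)"
        by (simp add: aut_facts(4,5)[OF th] thW[OF aW] thW[OF that])
      also have "\<dots> = st a * (v * st v) * b" by (simp add: st_mult mult.assoc)
      finally show "\<theta> (st a * b) = st a * b" using vv by simp
    qed
    obtain c0 where c0: "st a * a = kap c0" using pair[OF aW] by blast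
    obtain c1 where c1: "a * st a = kap c1"
    proof -
      have Av: "A v = U" unfolding v_def using AB by simp
      have t1: "\<theta> (a * st a) = st v * (a * st a) * v"
        by (simp add: aut_facts(4,5)[OF th] thW[OF aW] st_mult mult.assoc)
      have "\<theta> (A (a * st a)) = U * A (\<theta> (a * st a)) * st U" using coc by simp
      also have "A (\<theta> (a * st a)) = A (st v) * A (a * st a) * A v"
        unfolding t1 by (simp only: aut_facts(4)[OF aA])
      also have "\<dots> = st U * A (a * st a) * U" by (simp only: aut_facts(5)[OF aA] Av)
      finally have "\<theta> (A (a * st a)) = U * (st U * A (a * st a) * U) * st U" .
      also have "\<dots> = (U * st U) * A (a * st a) * (U * st U)" by (simp add: mult.assoc)
      finally have "\<theta> (A (a * st a)) = A (a * st a)" using UU by simp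
      then obtain c where "A (a * st a) = kap c" using ergE by blast
      hence "B (A (a * st a)) = kap c" using aut_kap[OF aB] by simp
      moreover have "B (A y) = y" for y
      proof -
        have "A (B (A y)) = A y" using AB by simp
        thus ?thesis using aut_facts(1)[OF aA] by (simp add: bij_is_inj inj_eq)
      qed
      ultimately show ?thesis using that by simp
    qed
    have c01: "c0 = c1"
    proof (rule ccontr)
      assume ne: "c0 \<noteq> c1"
      have "kap c0 * st a = st a * (a * st a)" using c0 by (simp add: mult.assoc[symmetric])
      also have "\<dots> = kap c1 * st a" using c1 by (simp add: mulk[of "st a"])
      finally have "kap c0 * st a = kap c1 * st a" .
      hence "kap (c0 - c1) * st a = 0" by (simp add: kap_diff algebra_simps)
      hence "kap (1 / (c0 - c1)) * (kap (c0 - c1) * st a) = 0" by simp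
      hence "st a = 0" using ne by (simp add: kk)
      hence "a = 0" using st_st[of a] by simp
      thus False using a0 by simp
    qed
    have c0nz: "c0 \<noteq> 0"
    proof
      assume "c0 = 0"
      hence "norm (st a * a) = 0" using c0 by simp
      thus False using a0 cstar_id[of a] by simp
    qed
    have "st (st a * a) = st a * a" by (simp add: st_mult)
    hence "kap (cnj c0) = kap c0" using c0 st_kap[of c0] by simp
    hence "cnj c0 = c0" by (rule kap_inj)
    hence "Im (cnj c0) = Im c0" by simp
    hence "Im c0 = 0" by simp
    hence c0r: "c0 = of_real (Re c0)" by (simp add: complex_eq_iff)
    define r where "r = Re c0"
    have r0: "r \<noteq> 0" using c0nz c0r unfolding r_def by auto
    have rpos: "r > 0"
    proof (rule ccontr)
      assume "\<not> r > 0"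
      hence rn: "r < 0" using r0 by simp
      define t where "t = 1 / sqrt (- r)"
      have ttr: "t * t * r = -1" unfolding t_def using rn
        by (simp add: field_simps)
      define x where "x = kap (of_real t) * a"
      have sx: "st x = kap (of_real t) * st a" unfolding x_def by (simp add: st_kapm)
      have e: "kap (of_real t) * y * (kap (of_real t) * y') = kap (of_real (t * t)) * (y * y')" for y y'
        by (simp add: mult.assoc xk[of y] kk)
      have "st x * x = kap (of_real (t * t)) * kap c0" by (simp only: sx) (simp only: x_def e c0)
      also have "\<dots> = kap (of_real (t * t * r))" using c0r unfolding r_def by (simp flip: kap_mult)
      finally have h1: "st x * x = -1" using ttr by (simp add: kap_minus)
      have "x * st x = kap (of_real (t * t)) * kap c1" by (simp only: sx) (simp only: x_def e c1)
      also have "\<dots> = kap (of_real (t * t * r))" using c0r c01 unfolding r_def by (simp flip: kap_mult)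
      finally have h2: "x * st x = -1" using ttr by (simp add: kap_minus)
      show False using no_neg[OF h1 h2] .
    qed
    define t where "t = 1 / sqrt r"
    have ttr: "t * t * r = 1" unfolding t_def using rpos by (simp add: field_simps)
    define w where "w = kap (of_real t) * a"
    have sw: "st w = kap (of_real t) * st a" unfolding w_def by (simp add: st_kapm)
    have e: "kap (of_real t) * y * (kap (of_real t) * y') = kap (of_real (t * t)) * (y * y')" for y y'
      by (simp add: mult.assoc xk[of y] kk)
    have wu: "unitary st w"
    proof -
      have "st w * w = kap (of_real (t * t)) * kap c0" by (simp only: sw) (simp only: w_def e c0)
      also have "\<dots> = kap (of_real (t * t * r))" using c0r unfolding r_def by (simp flip: kap_mult)
      finally have 1: "st w * w = 1" using ttr by simp
      have "w * st w = kap (of_real (t * t)) * kap c1" by (simp only: sw) (simp only: w_def e c1)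
      also have "\<dots> = kap (of_real (t * t * r))" using c0r c01 unfolding r_def by (simp flip: kap_mult)
      finally have 2: "w * st w = 1" using ttr by simp
      show ?thesis unfolding unitary_def using 1 2 by simp
    qed
    have aw: "a = kap (of_real (sqrt r)) * w"
    proof -
      have "kap (of_real (sqrt r)) * w = kap (of_real (sqrt r * t)) * a"
        unfolding w_def by (simp add: kk)
      also have "sqrt r * t = 1" unfolding t_def using rpos by simp
      finally show ?thesis by simp
    qed
    have "W = range (\<lambda>c. sc c w)"
    proof (intro equalityI subsetI)
      fix b assume bW: "b \<in> W"
      obtain cb where cb: "st a * b = kap cb" using pair[OF bW] by blast
      have "kap c0 * b = a * (st a * b)" using c1 c01 by (simp add: mult.assoc[symmetric])
      also have "\<dots> = kap cb * a" using cb by (simp add: mulk[of a])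
      finally have "kap (1 / c0) * (kap c0 * b) = kap (1 / c0) * (kap cb * a)" by simp
      hence "b = kap (cb / c0) * a" using c0nz by (simp add: kk)
      also have "\<dots> = kap (cb / c0 * of_real (sqrt r)) * w" by (subst aw) (simp add: kk)
      also have "\<dots> = sc (cb / c0 * of_real (sqrt r)) w" by (rule sc_kap[symmetric])
      finally show "b \<in> range (\<lambda>c. sc c w)" by blast
    next
      fix b assume "b \<in> range (\<lambda>c. sc c w)"
      then obtain c where "b = sc c w" by auto
      hence "b = kap c * w" by (simp only: sc_kap[of c w])
      hence "b = kap (c * of_real t) * a" unfolding w_def by (simp add: kk)
      thus "b \<in> W" using kW[OF aW] by simp
    qed
    thus ?thesis using wu unfolding W_def v_def by blast
  qed
qed

end

theorem mainTheorem7: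
  fixes sc :: "complex \<Rightarrow> 'a::{real_normed_algebra_1,banach} \<Rightarrow> 'a"
    and st :: "'a \<Rightarrow> 'a" and \<theta> \<alpha> :: "'a \<Rightarrow> 'a" and u :: 'a and n :: int
  assumes "cstar_algebra sc st"
    and "is_aut sc st \<theta>" and "is_aut sc st \<alpha>"
    and "unitary st u"
    and "\<forall>a. u * \<alpha> (\<theta> a) = \<theta> (\<alpha> a) * u"
    and "{a. \<theta> a = a} = range (\<lambda>c. sc c 1)"
  shows "{a. apow \<alpha> (- n) (cocycle st \<alpha> u n) * \<theta> a = a} = {0}
       \<or> (\<exists>w. unitary st w \<and>
            {a. apow \<alpha> (- n) (cocycle st \<alpha> u n) * \<theta> a = a} = range (\<lambda>c. sc c w))"
proof -
  interpret cstar sc st by (rule cstar.intro) (rule assms(1))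
  have cf: "(\<forall>w. apow \<alpha> n (apow \<alpha> (-n) w) = w) \<and> (\<forall>w. apow \<alpha> (-n) (apow \<alpha> n w) = w)
    \<and> unitary st (cocycle st \<alpha> u n)
    \<and> (\<forall>z. \<theta> (apow \<alpha> n z) = cocycle st \<alpha> u n * apow \<alpha> n (\<theta> z) * st (cocycle st \<alpha> u n))"
    by (rule cocycle_all[OF assms(2,3,4,5)])
  show ?thesis
    by (rule main_W[OF assms(2) aut_apow[OF assms(3)] aut_apow[OF assms(3)]])
       (use cf assms(6) in auto)
qed

end
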